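(* Let $G=(V,E)$ be a finite, simple, connected graph with $|V|\geq 3$ and let $d\in\mathrm{Der}(\mathcal{A}(G))$ with $d(e_i)=\sum_{k\in V}d_{ik}e_k$. Then: (i) for every $i\in V$, $d_{ii}=\frac{1}{2\deg(i)}\sum_{k\in\mathcal{N}(i)}d_{kk}$; (ii) if $i\sim_t j$ then $d_{ii}=d_{jj}$.
   Context: Throughout, $\mathbb{K}$ is a field of characteristic $0$. A graph $G=(V,E)$ has vertex set $V=\{1,\dots,n\}$ and is assumed finite, simple (no loops, no multiple edges) and connected. $\mathcal{N}(i)$ denotes the set of neighbors of vertex $i$, $\deg(i)=|\mathcal{N}(i)|$, and $(a_{ij})$ is the adjacency matrix ($a_{ij}=1$ if $i,j$ are adjacent, $0$ otherwise). The evolution algebra $\mathcal{A}(G)$ is the $\mathbb{K}$-algebra with basis $\{e_i: i\in V\}$ and product $e_i\cdot e_i=\sum_{k\in V}a_{ik}e_k=\sum_{k\in\mathcal{N}(i)}e_k$ and $e_i\cdot e_j=0$ for $i\neq j$. A derivation of $\mathcal{A}(G)$ is a linear map $d:\mathcal{A}(G)\to\mathcal{A}(G)$ with $d(u\cdot v)=d(u)\cdot v+u\cdot d(v)$ for all $u,v$; $\mathrm{Der}(\mathcal{A}(G))$ is the space of derivations, and for $d$ in it we write $d(e_i)=\sum_{k\in V}d_{ik}e_k$. Two vertices $i,j$ are twins, written $i\sim_t j$, if $\mathcal{N}(i)=\mathcal{N}(j)$. *)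

theory Defs
  imports Main
begin

text \<open>A finite simple graph on the vertex set UNIV of a finite type 'v,
  given by its adjacency relation E.\<close>

definition simple_graph :: "('v \<Rightarrow> 'v \<Rightarrow> bool) \<Rightarrow> bool" where
  "simple_graph E \<longleftrightarrow> (\<forall>i j. E i j \<longrightarrow> E j i) \<and> (\<forall>i. \<not> E i i)"

definition connected_graph :: "('v \<Rightarrow> 'v \<Rightarrow> bool) \<Rightarrow> bool" where
  "connected_graph E \<longleftrightarrow> (\<forall>i j. E\<^sup>*\<^sup>* i j)"

definition nbhd :: "('v \<Rightarrow> 'v \<Rightarrow> bool) \<Rightarrow> 'v \<Rightarrow> 'v set" where
  "nbhd E i = {k. E i k}"

definition deg :: "('v \<Rightarrow> 'v \<Rightarrow> bool) \<Rightarrow> 'v \<Rightarrow> nat" where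
  "deg E i = card (nbhd E i)"

definition twins :: "('v \<Rightarrow> 'v \<Rightarrow> bool) \<Rightarrow> 'v \<Rightarrow> 'v \<Rightarrow> bool" where
  "twins E i j \<longleftrightarrow> nbhd E i = nbhd E j"

text \<open>Elements of the evolution algebra A(G) are coordinate vectors
  u :: 'v \<Rightarrow> 'a, u = sum of u i * e_i.\<close>

definition adj :: "('v \<Rightarrow> 'v \<Rightarrow> bool) \<Rightarrow> 'v \<Rightarrow> 'v \<Rightarrow> 'a::field" where
  "adj E i k = (if E i k then 1 else 0)"

definition basis_vec :: "'v \<Rightarrow> ('v \<Rightarrow> 'a::field)" where
  "basis_vec i = (\<lambda>k. if k = i then 1 else 0)"

text \<open>Product: bilinear extension of e_i e_i = sum_k a_ik e_k, e_i e_j = 0 (i \<noteq> j).\<close>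
definition evo_mult :: "('v::finite \<Rightarrow> 'v \<Rightarrow> bool) \<Rightarrow> ('v \<Rightarrow> 'a::field) \<Rightarrow> ('v \<Rightarrow> 'a) \<Rightarrow> ('v \<Rightarrow> 'a)" where
  "evo_mult E u v = (\<lambda>k. \<Sum>i\<in>UNIV. u i * v i * adj E i k)"

definition linear_map :: "(('v \<Rightarrow> 'a::field) \<Rightarrow> ('v \<Rightarrow> 'a)) \<Rightarrow> bool" where
  "linear_map d \<longleftrightarrow> (\<forall>u v. d (\<lambda>k. u k + v k) = (\<lambda>k. d u k + d v k)) \<and> (\<forall>c u. d (\<lambda>k. c * u k) = (\<lambda>k. c * d u k))"

definition is_derivation :: "('v::finite \<Rightarrow> 'v \<Rightarrow> bool) \<Rightarrow> (('v \<Rightarrow> 'a::field) \<Rightarrow> ('v \<Rightarrow> 'a)) \<Rightarrow> bool" where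
  "is_derivation E d \<longleftrightarrow> linear_map d \<and>
     (\<forall>u v. d (evo_mult E u v) = (\<lambda>k. evo_mult E (d u) v k + evo_mult E u (d v) k))"

definition dcoef :: "(('v \<Rightarrow> 'a::field) \<Rightarrow> ('v \<Rightarrow> 'a)) \<Rightarrow> 'v \<Rightarrow> 'v \<Rightarrow> 'a" where
  "dcoef d i k = d (basis_vec i) k"

end

theory Submission
  imports Defs
begin

lemma lin_zero:
  assumes "linear_map d" shows "d (\<lambda>k. 0) = (\<lambda>k. 0)"
proof -
  have "d (\<lambda>k. 0 * (\<lambda>k. 0) k) = (\<lambda>k. 0 * d (\<lambda>k. 0) k)"
  proof -
    have h: "\<forall>c u. d (\<lambda>k. c * u k) = (\<lambda>k. c * d u k)" using assms unfolding linear_map_def by blast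
    show ?thesis using h[rule_format, of 0 "\<lambda>k. 0"] .
  qed
  thus ?thesis by simp
qed

lemma lin_sum:
  assumes "linear_map d" and "finite A"
  shows "d (\<lambda>k. \<Sum>x\<in>A. f x k) = (\<lambda>m. \<Sum>x\<in>A. d (f x) m)"
  using assms(2)
proof (induction A rule: finite_induct)
  case empty thus ?case using lin_zero[OF assms(1)] by simp
next
  case (insert a A)
  have "d (\<lambda>k. \<Sum>x\<in>insert a A. f x k) = d (\<lambda>k. f a k + (\<Sum>x\<in>A. f x k))"
    using insert by simp
  also have "\<dots> = (\<lambda>m. d (f a) m + d (\<lambda>k. \<Sum>x\<in>A. f x k) m)"
    using assms(1) unfolding linear_map_def
    by (metis (no_types) spec[of _ "f a"])
  finally show ?case using insert by simp
qed

lemma lin_expand: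
  fixes d :: "('v::finite \<Rightarrow> 'a::field) \<Rightarrow> ('v \<Rightarrow> 'a)"
  assumes "linear_map d"
  shows "d u m = (\<Sum>x\<in>UNIV. u x * dcoef d x m)"
proof -
  have u: "u = (\<lambda>k. \<Sum>x\<in>UNIV. u x * basis_vec x k)"
    by (rule ext) (simp add: basis_vec_def if_distrib cong: if_cong)
  have sc: "d (\<lambda>k. u x * basis_vec x k) = (\<lambda>m. u x * d (basis_vec x) m)" for x
    using assms unfolding linear_map_def by blast
  have "d u = d (\<lambda>k. \<Sum>x\<in>UNIV. u x * basis_vec x k)" using u by simp
  also have "\<dots> = (\<lambda>m. \<Sum>x\<in>UNIV. d (\<lambda>k. u x * basis_vec x k) m)"
    using lin_sum[OF assms, of UNIV "\<lambda>x k. u x * basis_vec x k"] by simp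
  finally show ?thesis by (simp add: sc dcoef_def)
qed

lemma sum_adj:
  fixes f :: "'v::finite \<Rightarrow> 'a::field"
  shows "(\<Sum>x\<in>UNIV. adj E i x * f x) = (\<Sum>x\<in>nbhd E i. f x)"
proof -
  have "(\<Sum>x\<in>nbhd E i. f x) = (\<Sum>x\<in>UNIV. if E i x then f x else 0)"
    using sum.inter_filter[of UNIV f "E i"] by (simp add: nbhd_def)
  moreover have "(\<Sum>x\<in>UNIV. adj E i x * f x) = (\<Sum>x\<in>UNIV. if E i x then f x else 0)"
    by (rule sum.cong) (auto simp: adj_def)
  ultimately show ?thesis by simp
qed

theorem corollary3p2:
  fixes E :: "'v::finite \<Rightarrow> 'v \<Rightarrow> bool"
    and d :: "('v \<Rightarrow> 'a::field_char_0) \<Rightarrow> ('v \<Rightarrow> 'a)"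
  assumes "simple_graph E"
    and "connected_graph E"
    and "card (UNIV :: 'v set) \<ge> 3"
    and "is_derivation E d"
  shows "(\<forall>i. dcoef d i i = (1 / (2 * of_nat (deg E i))) * (\<Sum>k\<in>nbhd E i. dcoef d k k))
       \<and> (\<forall>i j. twins E i j \<longrightarrow> dcoef d i i = dcoef d j j)"
proof -
  define D where "D = dcoef d"
  have lin: "linear_map d" using assms(4) unfolding is_derivation_def by blast
  have der: "d (evo_mult E u v) m = evo_mult E (d u) v m + evo_mult E u (d v) m" for u v m
    using assms(4) unfolding is_derivation_def by metis
  have em1: "evo_mult E u (basis_vec j) m = u j * adj E j m" for u j m
  proof -
    have "evo_mult E u (basis_vec j) m = (\<Sum>x\<in>UNIV. if x = j then u j * adj E j m else 0)"
      unfolding evo_mult_def by (rule sum.cong) (auto simp: basis_vec_def)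
    thus ?thesis by simp
  qed
  have em2: "evo_mult E (basis_vec i) v m = v i * adj E i m" for v i m
  proof -
    have "evo_mult E (basis_vec i) v m = (\<Sum>x\<in>UNIV. if x = i then v i * adj E i m else 0)"
      unfolding evo_mult_def by (rule sum.cong) (auto simp: basis_vec_def)
    thus ?thesis by simp
  qed
  have em3: "evo_mult E (basis_vec i) (basis_vec j) = (\<lambda>m. if i = j then adj E i m else 0)" for i j
  proof (rule ext)
    fix m
    have "evo_mult E (basis_vec i) (basis_vec j) m = (\<Sum>x\<in>UNIV. if x = i then (if i = j then adj E i m else 0) else 0)"
      unfolding evo_mult_def by (rule sum.cong) (auto simp: basis_vec_def)
    thus "evo_mult E (basis_vec i) (basis_vec j) m = (if i = j then adj E i m else 0)" by simp
  qed
  have key: "d (evo_mult E (basis_vec i) (basis_vec j)) m = D i j * adj E j m + D j i * adj E i m" for i j m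
    using der[of "basis_vec i" "basis_vec j" m] em1[of "d (basis_vec i)" j m] em2[of i "d (basis_vec j)" m]
    by (simp add: D_def dcoef_def)
  have A: "(\<Sum>x\<in>nbhd E i. D x m) = (if E i m then 2 * D i i else 0)" for i m
  proof -
    have "d (evo_mult E (basis_vec i) (basis_vec i)) m = (\<Sum>x\<in>UNIV. adj E i x * D x m)"
      unfolding em3 using lin_expand[OF lin, of "\<lambda>m. adj E i m" m] by (simp add: D_def)
    also have "\<dots> = (\<Sum>x\<in>nbhd E i. D x m)" by (rule sum_adj)
    finally show ?thesis using key[of i i m] by (cases "E i m") (auto simp: adj_def)
  qed
  have B: "D i j * adj E j m + D j i * adj E i m = 0" if "i \<noteq> j" for i j m
  proof -
    have "d (evo_mult E (basis_vec i) (basis_vec j)) m = d (\<lambda>m. 0) m"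
      unfolding em3 using that by simp
    thus ?thesis using key[of i j m] lin_zero[OF lin] by simp
  qed
  have nb: "\<exists>k. E i k" for i
  proof -
    have "\<exists>j. j \<noteq> i"
    proof (rule ccontr)
      assume "\<not> (\<exists>j. j \<noteq> i)"
      hence "(UNIV :: 'v set) = {i}" by auto
      hence "card (UNIV :: 'v set) = card {i}" by (rule arg_cong)
      hence "card (UNIV :: 'v set) = 1" by simp
      thus False using assms(3) by linarith
    qed
    then obtain j where j: "j \<noteq> i" by blast
    have "E\<^sup>*\<^sup>* i j" using assms(2) unfolding connected_graph_def by blast
    thus ?thesis using j by (cases rule: converse_rtranclpE) auto
  qed
  have anti: "D k m + D m k = 0" if "k \<noteq> m" for k m
  proof (cases "nbhd E k = nbhd E m")
    case True
    obtain x where x: "E k x" using nb by blast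
    hence "E m x" using True by (auto simp: nbhd_def)
    thus ?thesis using B[OF that, of x] x by (simp add: adj_def)
  next
    case False
    then obtain x where "E k x \<noteq> E m x" by (auto simp: nbhd_def)
    then consider "E m x" "\<not> E k x" | "E k x" "\<not> E m x" by blast
    thus ?thesis
    proof cases
      case 1
      have z: "D k m = 0" using B[OF that, of x] 1 by (simp add: adj_def)
      obtain y where "E k y" using nb by blast
      thus ?thesis using B[OF that, of y] z by (simp add: adj_def)
    next
      case 2
      have z: "D m k = 0" using B[OF that[symmetric], of x] 2 by (simp add: adj_def)
      obtain y where "E m y" using nb by blast
      thus ?thesis using B[OF that[symmetric], of y] z by (simp add: adj_def)
    qed
  qed
  have part1: "D i i = (1 / (2 * of_nat (deg E i))) * (\<Sum>k\<in>nbhd E i. D k k)" for i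
  proof -
    define N where "N = nbhd E i"
    have fin: "finite N" by simp
    have X1: "(\<Sum>m\<in>N. \<Sum>k\<in>N. D k m) = of_nat (card N) * (2 * D i i)"
      using A by (simp add: N_def nbhd_def)
    have sw: "(\<Sum>m\<in>N. \<Sum>k\<in>N. D k m) = (\<Sum>k\<in>N. \<Sum>m\<in>N. D k m)" by (rule sum.swap)
    have inner: "(\<Sum>m\<in>N. D k m + D m k) = (if k \<in> N then 2 * D k k else 0)" for k
    proof -
      have "(\<Sum>m\<in>N. D k m + D m k) = (\<Sum>m\<in>N. if m = k then 2 * D k k else 0)"
        by (rule sum.cong) (auto simp: anti)
      thus ?thesis using fin by simp
    qed
    have "2 * (\<Sum>m\<in>N. \<Sum>k\<in>N. D k m) = (\<Sum>k\<in>N. \<Sum>m\<in>N. D k m + D m k)"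
      using sw by (simp add: sum.distrib)
    also have "\<dots> = (\<Sum>k\<in>N. 2 * D k k)" using inner by simp
    finally have "(\<Sum>m\<in>N. \<Sum>k\<in>N. D k m) = (\<Sum>k\<in>N. D k k)"
      by (simp add: sum_distrib_left[symmetric])
    with X1 have eq: "of_nat (card N) * (2 * D i i) = (\<Sum>k\<in>N. D k k)" by simp
    have "card N \<noteq> 0" using nb[of i] fin by (auto simp: N_def nbhd_def)
    hence "(of_nat (card N) :: 'a) \<noteq> 0" by simp
    with eq show ?thesis by (simp add: deg_def N_def[symmetric] field_simps)
  qed
  have part2: "D i i = D j j" if "twins E i j" for i j
  proof -
    obtain m where m: "E i m" using nb by blast
    have "E j m" using m that by (auto simp: twins_def nbhd_def)
    have t: "nbhd E i = nbhd E j" using that by (simp add: twins_def)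
    have "2 * D i i = (\<Sum>x\<in>nbhd E i. D x m)" using A[of m i] m by simp
    also have "\<dots> = (\<Sum>x\<in>nbhd E j. D x m)" using t by simp
    also have "\<dots> = 2 * D j j" using A[of m j] \<open>E j m\<close> by simp
    finally show ?thesis by simp
  qed
  show ?thesis using part1 part2 unfolding D_def by blast
qed

end
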